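(* Let $\gamma<1$ and suppose that $$\lim_{x\uparrow\infty}\frac{u_0'(x)}{x^{\gamma-1}}=1.$$ Then, for each $t_0\ge 0$, $$\lim_{x\uparrow\infty}\frac{r(x,t_0)}{x}=\frac{1}{1-\gamma}.$$
   Context: Let $\mu$ be a nonzero finite positive Borel measure on $(0,\infty)$ such that $\int y e^{yz}\mu(dy)<\infty$ for every $z\in\mathbb{R}$. Define $h(z,t):=\int e^{yz-\frac12 y^2 t}\mu(dy)$ for $(z,t)\in\mathbb{R}\times[0,\infty)$. For each $t$, the map $z\mapsto h(z,t)$ is smooth and strictly increasing with range $(0,\infty)$. Let $h^{(-1)}(x,t)$ denote its inverse in $z$. Let $u:(0,\infty)\times[0,\infty)\to\mathbb{R}$ be smooth, strictly increasing and strictly concave in $x$, solving $u_t=\frac12 u_x^2/u_{xx}$, and related to $h$ by $u_x(h(z,t),t)=e^{-z+t/2}$ for all $(z,t)$. Write $u_0(x):=u(x,0)$. The risk tolerance function is $r(x,t):=-u_x(x,t)/u_{xx}(x,t)$. Equivalently, $r(x,t)=h_z(h^{(-1)}(x,t),t)$. *)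

theory Defs
  imports "HOL-Probability.Probability"
begin

definition hfun :: "real measure \<Rightarrow> real \<Rightarrow> real \<Rightarrow> real" where
  "hfun \<mu> z t = (\<integral>y. exp (y * z - y\<^sup>2 * t / 2) \<partial>\<mu>)"

definition strictly_concave_on :: "real set \<Rightarrow> (real \<Rightarrow> real) \<Rightarrow> bool" where
  "strictly_concave_on S f \<longleftrightarrow>
     (\<forall>x\<in>S. \<forall>y\<in>S. x \<noteq> y \<longrightarrow> (\<forall>a::real. 0 < a \<and> a < 1 \<longrightarrow>
        f (a * x + (1 - a) * y) > a * f x + (1 - a) * f y))"

end

theory Submission
  imports Defs "HOL-Real_Asymp.Real_Asymp"
begin
thm Bochner_Integration.integral_indicator Bochner_Integration.integrable_bound
lemma asym1: "0 < d \<Longrightarrow> 0 < m \<Longrightarrow> filterlim (\<lambda>z::real. m * exp (d*z)) at_top at_top" by real_asymp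
lemma asym2: "y < (c::real) \<Longrightarrow> ((\<lambda>z::real. exp ((y-c)*z)) \<longlongrightarrow> 0) at_top" by real_asymp

lemma exp_lip: fixes p q :: real shows "\<bar>exp p - exp q\<bar> \<le> \<bar>p - q\<bar> * exp (max p q)"
proof -
  have key: "exp b - exp a \<le> (b - a) * exp b" if "a \<le> b" for a b :: real
  proof -
    have "1 + (a - b) \<le> exp (a - b)" by (rule exp_ge_add_one_self)
    then have "1 - exp (a - b) \<le> b - a" by linarith
    then have "exp b * (1 - exp (a - b)) \<le> exp b * (b - a)" by (intro mult_left_mono) auto
    moreover have "exp b * exp (a - b) = exp a" by (simp add: exp_add[symmetric])
    ultimately show ?thesis by (simp add: algebra_simps)
  qed
  show ?thesis
  proof (cases "q \<le> p")
    case True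
    then show ?thesis using key[OF True] by (simp add: max_def)
  next
    case False
    then show ?thesis using key[of p q] by (simp add: max_def abs_minus_commute)
  qed
qed


locale msetup = finite_measure \<mu> for \<mu> :: "real measure" +
  assumes sets_eq: "sets \<mu> = sets borel"
    and nz: "emeasure \<mu> (space \<mu>) \<noteq> 0"
    and supp: "emeasure \<mu> {..0} = 0"
    and intg: "\<And>z. integrable \<mu> (\<lambda>y. y * exp (y * z))"
begin

lemma meas: "f \<in> borel_measurable borel \<Longrightarrow> f \<in> borel_measurable \<mu>"
  using measurable_cong_sets[OF sets_eq refl, of borel] by blast

lemma space_eq: "space \<mu> = UNIV"
  using sets_eq_imp_space_eq[OF sets_eq] by simp

lemma sets_in: "A \<in> sets borel \<Longrightarrow> A \<in> sets \<mu>"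
  using sets_eq by simp

lemma AE_pos: "AE y in \<mu>. 0 < y"
proof (rule AE_I'[of "{..0}"])
  show "{..0} \<in> null_sets \<mu>" using supp sets_in[of "{..0}"] by (auto simp: null_sets_def)
  show "{x \<in> space \<mu>. \<not> 0 < x} \<subseteq> {..0}" by auto
qed

lemma int_exp: "integrable \<mu> (\<lambda>y. exp (y * z))"
proof (rule Bochner_Integration.integrable_bound)
  show "integrable \<mu> (\<lambda>y. exp \<bar>z\<bar> + y * exp (y * z))"
    by (intro Bochner_Integration.integrable_add intg integrable_const)
  show "(\<lambda>y. exp (y * z)) \<in> borel_measurable \<mu>" by (intro meas) measurable
  show "AE y in \<mu>. norm (exp (y * z)) \<le> norm (exp \<bar>z\<bar> + y * exp (y * z))"
    using AE_pos
  proof eventually_elim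
    case (elim y)
    show ?case
    proof (cases "y \<ge> 1")
      case True
      then have "exp (y*z) \<le> y * exp (y*z)" by simp
      moreover have "0 < exp \<bar>z\<bar>" by simp
      ultimately have "exp (y*z) \<le> exp \<bar>z\<bar> + y * exp (y*z)" by linarith
      moreover have "0 \<le> exp \<bar>z\<bar> + y * exp (y*z)" using elim by (simp add: add_nonneg_nonneg)
      ultimately show ?thesis by simp
    next
      case False
      have "y * z \<le> \<bar>y * z\<bar>" by simp
      also have "\<bar>y * z\<bar> = y * \<bar>z\<bar>" using elim by (simp add: abs_mult)
      also have "y * \<bar>z\<bar> \<le> 1 * \<bar>z\<bar>" using False elim by (intro mult_right_mono) auto
      finally have "y * z \<le> \<bar>z\<bar>" by simp
      then have "exp (y*z) \<le> exp \<bar>z\<bar>" by simp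
      then show ?thesis using elim by (simp add: add_increasing2)
    qed
  qed
qed

lemma int_h: "0 \<le> t \<Longrightarrow> integrable \<mu> (\<lambda>y. exp (y * z - y\<^sup>2 * t / 2))"
  apply (rule Bochner_Integration.integrable_bound[OF int_exp[of z]])
   apply (intro meas; measurable)
  by (auto intro!: AE_I2)

lemma int_hd: "0 \<le> t \<Longrightarrow> integrable \<mu> (\<lambda>y. y * exp (y * z - y\<^sup>2 * t / 2))"
  apply (rule Bochner_Integration.integrable_bound[OF intg[of z]])
   apply (intro meas; measurable)
  by (auto intro!: AE_I2 simp: abs_mult mult_left_mono)

lemma int_shift: "integrable \<mu> (\<lambda>y. exp ((y - b) * z))"
proof -
  have "(\<lambda>y. exp ((y - b) * z)) = (\<lambda>y. exp (y * z) / exp (b * z))"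
    by (auto simp: exp_diff[symmetric] algebra_simps)
  then show ?thesis using int_exp[of z] by simp
qed

lemma pos_meas: assumes "emeasure \<mu> {b<..} \<noteq> 0" shows "\<exists>e>0. measure \<mu> {b+e..} > 0"
proof (rule ccontr)
  assume neg: "\<not> ?thesis"
  have z: "measure \<mu> {b + 1/Suc n..} = 0" for n :: nat
  proof -
    have "1/real (Suc n) > 0" by simp
    then have "\<not> 0 < measure \<mu> {b + 1/Suc n..}" using neg by blast
    then show ?thesis using measure_nonneg[of \<mu> "{b + 1/Suc n..}"] by linarith
  qed
  have "(\<Union>n::nat. {b + 1/Suc n..}) \<in> null_sets \<mu>"
    using z by (intro null_sets_UN) (auto simp: null_sets_def sets_in emeasure_eq_measure)
  moreover have "(\<Union>n::nat. {b + 1/Suc n..}) = {b<..}"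
  proof (intro set_eqI iffI)
    fix x assume "x \<in> {b<..}"
    then have "x > b" by simp
    then obtain n :: nat where "1 / Suc n < x - b"
      by (metis diff_gt_0_iff_gt nat_approx_posE)
    then have "b + 1/Suc n \<le> x" by simp
    then show "x \<in> (\<Union>n::nat. {b + 1/Suc n..})" by blast
  next
    fix x assume "x \<in> (\<Union>n::nat. {b + 1/Suc n..})"
    then obtain n :: nat where "b + 1 / Suc n \<le> x" by auto
    moreover have "0 < 1 / real (Suc n)" by simp
    ultimately have "b < x" by linarith
    then show "x \<in> {b<..}" by simp
  qed
  ultimately have "{b<..} \<in> null_sets \<mu>" by simp
  then show False using assms by (simp add: null_setsD1)
qed

lemma LB: assumes "0 \<le> z" shows "(\<integral>y. exp ((y - b) * z) \<partial>\<mu>) \<ge> measure \<mu> {b+e..} * exp (e * z)"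
proof -
  have "(\<integral>y. indicator {b+e..} y * exp (e * z) \<partial>\<mu>) \<le> (\<integral>y. exp ((y - b) * z) \<partial>\<mu>)"
  proof (rule integral_mono)
    show "integrable \<mu> (\<lambda>y. indicator {b+e..} y * exp (e * z))"
      by (intro integrable_mult_left integrable_real_indicator) (auto simp: sets_in less_top[symmetric] emeasure_finite)
    show "integrable \<mu> (\<lambda>y. exp ((y - b) * z))" by (rule int_shift)
    fix y show "indicator {b + e..} y * exp (e * z) \<le> exp ((y - b) * z)"
      using assms by (auto simp: indicator_def mult_right_mono)
  qed
  then show ?thesis by (simp add: sets_in)
qed

lemma top_shift: assumes "emeasure \<mu> {b<..} \<noteq> 0"
  shows "filterlim (\<lambda>z. \<integral>y. exp ((y - b) * z) \<partial>\<mu>) at_top at_top"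
proof -
  obtain e where e: "e > 0" "measure \<mu> {b+e..} > 0" using pos_meas[OF assms] by blast
  have "filterlim (\<lambda>z. measure \<mu> {b+e..} * exp (e * z)) at_top at_top"
    using e by (rule asym1)
  then show ?thesis
    by (rule filterlim_at_top_mono) (unfold eventually_at_top_linorder, intro exI[of _ 0] allI impI LB)
qed


lemma DC: assumes c: "AE y in \<mu>. y \<le> c" and g: "g \<in> borel_measurable borel"
    and K: "\<And>y. 0 < y \<Longrightarrow> y \<le> c \<Longrightarrow> \<bar>g y\<bar> \<le> K"
  shows "((\<lambda>z. \<integral>y. g y * exp ((y - c) * z) \<partial>\<mu>) \<longlongrightarrow> measure \<mu> {c} * g c) at_top"
proof -
  have "((\<lambda>z. \<integral>y. g y * exp ((y - c) * z) \<partial>\<mu>) \<longlongrightarrow> (\<integral>y. indicator {c} y * g c \<partial>\<mu>)) at_top"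
  proof (rule integral_dominated_convergence_at_top[where w="\<lambda>_. K"])
    show "(\<lambda>y. indicator {c} y * g c) \<in> borel_measurable \<mu>" by (intro meas) measurable
    show "\<And>t. (\<lambda>y. g y * exp ((y - c) * t)) \<in> borel_measurable \<mu>" by (rule meas, rule borel_measurable_times[OF g], rule borel_measurable_continuous_onI, intro continuous_intros)
    show "integrable \<mu> (\<lambda>_. K)" by simp
    show "AE y in \<mu>. ((\<lambda>z. g y * exp ((y - c) * z)) \<longlongrightarrow> indicator {c} y * g c) at_top"
      using AE_pos c
    proof eventually_elim
      case (elim y)
      show ?case
      proof (cases "y = c")
        case True then show ?thesis by simp
      next
        case False
        then have "y < c" using elim by simp
        then have "((\<lambda>z. exp ((y - c) * z)) \<longlongrightarrow> 0) at_top" by (rule asym2)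
        then have "((\<lambda>z. g y * exp ((y - c) * z)) \<longlongrightarrow> g y * 0) at_top" by (intro tendsto_mult tendsto_const)
        then show ?thesis using False by simp
      qed
    qed
    show "\<forall>\<^sub>F z in at_top. AE y in \<mu>. norm (g y * exp ((y - c) * z)) \<le> K"
      unfolding eventually_at_top_linorder
    proof (intro exI[of _ 0] allI impI)
      fix z :: real assume z: "0 \<le> z"
      show "AE y in \<mu>. norm (g y * exp ((y - c) * z)) \<le> K" using AE_pos c
      proof eventually_elim
        case (elim y)
        have E: "exp ((y-c)*z) \<le> 1" using elim z by (simp add: mult_nonpos_nonneg)
        have K0: "0 \<le> K" using K[of y] elim by (meson abs_ge_zero order_trans)
        then have "\<bar>g y\<bar> * exp ((y-c)*z) \<le> K * 1"
          by (rule mult_mono[OF K[OF elim(1) elim(2)] E]) (use K0 in auto)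
        then show ?case by (simp add: abs_mult)
      qed
    qed
  qed
  moreover have "(\<integral>y. indicator {c} y * g c \<partial>\<mu>) = measure \<mu> {c} * g c"
    by (simp add: sets_in space_eq)
  ultimately show ?thesis by (simp add: space_eq)
qed

lemma support:
  assumes L: "((\<lambda>z. \<integral>y. exp ((y - c) * z) \<partial>\<mu>) \<longlongrightarrow> 1) at_top"
  shows "AE y in \<mu>. y \<le> c" "measure \<mu> {c} = 1"
proof -
  have "emeasure \<mu> {c<..} = 0"
  proof (rule ccontr)
    assume "emeasure \<mu> {c<..} \<noteq> 0"
    from top_shift[OF this] have "filterlim (\<lambda>z. \<integral>y. exp ((y - c) * z) \<partial>\<mu>) at_infinity at_top"
      by (rule filterlim_at_top_imp_at_infinity)
    then show False using not_tendsto_and_filterlim_at_infinity[OF _ L] by simp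
  qed
  then show A: "AE y in \<mu>. y \<le> c"
    by (intro AE_I'[of "{c<..}"]) (auto simp: null_sets_def sets_in)
  have "((\<lambda>z. \<integral>y. 1 * exp ((y - c) * z) \<partial>\<mu>) \<longlongrightarrow> measure \<mu> {c} * 1) at_top"
    by (rule DC[OF A]) auto
  then show "measure \<mu> {c} = 1" using L tendsto_unique[OF trivial_limit_at_top_linorder] by fastforce
qed


lemma H_deriv: assumes c: "AE y in \<mu>. y \<le> c" "0 < c" and t: "0 \<le> t"
  shows "((\<lambda>z. hfun \<mu> z t) has_real_derivative (\<integral>y. y * exp (y * z - y\<^sup>2 * t / 2) \<partial>\<mu>)) (at z)"
  unfolding has_field_derivative_iff tendsto_at_iff_sequentially
proof (intro allI impI)
  fix X :: "nat \<Rightarrow> real" assume X: "\<forall>i. X i \<in> UNIV - {z}" "X \<longlonglongrightarrow> z"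
  have "Bseq X" using X(2) by (intro convergent_imp_Bseq convergentI)
  then obtain K where K: "0 < K" "\<And>n. norm (X n) \<le> K" by (rule BseqE) auto
  define M where "M = K + \<bar>z\<bar>"
  have M1: "X n \<le> M" for n
    using K(2)[of n, unfolded real_norm_def] abs_ge_self[of "X n"] abs_ge_zero[of z] unfolding M_def by linarith
  have M: "0 \<le> M" "\<And>n. X n \<le> M" "z \<le> M"
    using K(1) M1 abs_ge_self[of z] unfolding M_def by auto
  define q where "q = (\<lambda>w y. (exp (y * w - y\<^sup>2 * t / 2) - exp (y * z - y\<^sup>2 * t / 2)) / (w - z))"
  have eq: "(hfun \<mu> w t - hfun \<mu> z t) / (w - z) = (\<integral>y. q w y \<partial>\<mu>)" for w
  proof -
    have "(\<integral>y. q w y \<partial>\<mu>) = (\<integral>y. exp (y * w - y\<^sup>2 * t / 2) - exp (y * z - y\<^sup>2 * t / 2) \<partial>\<mu>) / (w - z)"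
      unfolding q_def by (rule integral_divide_zero)
    also have "(\<integral>y. exp (y * w - y\<^sup>2 * t / 2) - exp (y * z - y\<^sup>2 * t / 2) \<partial>\<mu>)
       = (\<integral>y. exp (y * w - y\<^sup>2 * t / 2) \<partial>\<mu>) - (\<integral>y. exp (y * z - y\<^sup>2 * t / 2) \<partial>\<mu>)"
      by (rule Bochner_Integration.integral_diff[OF int_h[OF t] int_h[OF t]])
    finally show ?thesis unfolding hfun_def by simp
  qed
  have "(\<lambda>i. \<integral>y. q (X i) y \<partial>\<mu>) \<longlonglongrightarrow> (\<integral>y. y * exp (y * z - y\<^sup>2 * t / 2) \<partial>\<mu>)"
  proof (rule integral_dominated_convergence[where w="\<lambda>_. c * exp (c * M)"])
    show "(\<lambda>y. y * exp (y * z - y\<^sup>2 * t / 2)) \<in> borel_measurable \<mu>" by (intro meas) measurable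
    show "\<And>i. q (X i) \<in> borel_measurable \<mu>" unfolding q_def
      by (intro meas borel_measurable_divide borel_measurable_diff borel_measurable_const borel_measurable_continuous_onI continuous_intros) auto
    show "integrable \<mu> (\<lambda>_. c * exp (c * M))" by simp
    show "AE y in \<mu>. (\<lambda>i. q (X i) y) \<longlonglongrightarrow> y * exp (y * z - y\<^sup>2 * t / 2)"
    proof (intro AE_I2)
      fix y :: real
      have "((\<lambda>w. exp (y * w - y\<^sup>2 * t / 2)) has_real_derivative exp (y * z - y\<^sup>2 * t / 2) * y) (at z)"
        by (auto intro!: derivative_eq_intros)
      then have "((\<lambda>w. q w y) \<longlongrightarrow> exp (y * z - y\<^sup>2 * t / 2) * y) (at z)"
        unfolding has_field_derivative_iff q_def by simp
      then have "((\<lambda>w. q w y) \<circ> X) \<longlonglongrightarrow> exp (y * z - y\<^sup>2 * t / 2) * y"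
        unfolding tendsto_at_iff_sequentially using X by blast
      then show "(\<lambda>i. q (X i) y) \<longlonglongrightarrow> y * exp (y * z - y\<^sup>2 * t / 2)"
        by (simp add: o_def mult.commute)
    qed
    show "AE y in \<mu>. norm (q (X i) y) \<le> c * exp (c * M)" for i
      using AE_pos c(1)
    proof eventually_elim
      case (elim y)
      let ?p = "y * X i - y\<^sup>2 * t / 2" and ?r = "y * z - y\<^sup>2 * t / 2"
      have ne: "X i \<noteq> z" using X(1) by auto
      have mx: "max ?p ?r \<le> c * M"
      proof -
        have "y\<^sup>2 * t / 2 \<ge> 0" using t by simp
        moreover have "y * X i \<le> y * M" "y * z \<le> y * M" using elim M by (auto intro: mult_left_mono)
        moreover have "y * M \<le> c * M" using elim M by (auto intro: mult_right_mono)
        ultimately show ?thesis by simp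
      qed
      have "\<bar>exp ?p - exp ?r\<bar> \<le> \<bar>?p - ?r\<bar> * exp (max ?p ?r)" by (rule exp_lip)
      also have "\<bar>?p - ?r\<bar> = y * \<bar>X i - z\<bar>" proof -
        have "?p - ?r = y * (X i - z)" by (simp add: algebra_simps)
        then show ?thesis using elim by (simp add: abs_mult)
      qed
      also have "y * \<bar>X i - z\<bar> * exp (max ?p ?r) \<le> y * \<bar>X i - z\<bar> * exp (c * M)"
        using elim mx by (intro mult_left_mono) auto
      finally have h: "\<bar>exp ?p - exp ?r\<bar> \<le> y * \<bar>X i - z\<bar> * exp (c * M)" .
      have pos: "0 < \<bar>X i - z\<bar>" using ne by simp
      have eqn: "y * \<bar>X i - z\<bar> * exp (c * M) = y * exp (c * M) * \<bar>X i - z\<bar>" by (simp only: mult.assoc mult.commute[of "\<bar>X i - z\<bar>"])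
      from h have h2: "\<bar>exp ?p - exp ?r\<bar> \<le> y * exp (c * M) * \<bar>X i - z\<bar>" by (simp only: eqn)
      have "\<bar>exp ?p - exp ?r\<bar> / \<bar>X i - z\<bar> \<le> y * exp (c * M)"
        by (subst pos_divide_le_eq[OF pos]) (rule h2)
      also have "\<dots> \<le> c * exp (c * M)" using elim by (intro mult_right_mono) auto
      finally show ?case unfolding q_def by (simp add: abs_divide)
    qed
  qed
  then show "((\<lambda>w. (hfun \<mu> w t - hfun \<mu> z t) / (w - z)) \<circ> X) \<longlonglongrightarrow> (\<integral>y. y * exp (y * z - y\<^sup>2 * t / 2) \<partial>\<mu>)"
    by (simp add: o_def eq)
qed

end


lemma powr_id:
  fixes H z g :: real assumes "0 < H" "g < 1"
  shows "(exp (- z) / H powr (g - 1)) powr (1 / (g - 1)) = exp (1 / (1 - g) * z) / H"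
proof -
  have ne: "g - 1 \<noteq> 0" using assms by simp
  have "(exp (- z) / H powr (g - 1)) powr (1 / (g - 1)) = exp ((1 / (g - 1)) * (- z - (g - 1) * ln H))"
    using assms by (simp add: powr_def ln_div)
  also have "(1 / (g - 1)) * (- z - (g - 1) * ln H) = 1 / (1 - g) * z - ln H"
    using ne by (simp add: field_simps)
  also have "exp (1 / (1 - g) * z - ln H) = exp (1 / (1 - g) * z) / H"
    using assms by (simp add: exp_diff)
  finally show ?thesis .
qed

theorem proposition3:
  fixes \<mu> :: "real measure"
    and u ux uxx :: "real \<Rightarrow> real \<Rightarrow> real"
    and \<gamma> t0 :: real
  assumes mu_sets: "sets \<mu> = sets borel"
    and mu_finite: "finite_measure \<mu>"
    and mu_nonzero: "emeasure \<mu> (space \<mu>) \<noteq> 0"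
    and mu_support: "emeasure \<mu> {..0} = 0"
    and mu_int: "\<And>z. integrable \<mu> (\<lambda>y. y * exp (y * z))"
    and u_x: "\<And>x t. 0 < x \<Longrightarrow> 0 \<le> t \<Longrightarrow> ((\<lambda>x'. u x' t) has_real_derivative ux x t) (at x)"
    and u_xx: "\<And>x t. 0 < x \<Longrightarrow> 0 \<le> t \<Longrightarrow> ((\<lambda>x'. ux x' t) has_real_derivative uxx x t) (at x)"
    and u_incr: "\<And>t. 0 \<le> t \<Longrightarrow> strict_mono_on {0<..} (\<lambda>x. u x t)"
    and u_conc: "\<And>t. 0 \<le> t \<Longrightarrow> strictly_concave_on {0<..} (\<lambda>x. u x t)"
    and u_pde: "\<And>x t. 0 < x \<Longrightarrow> 0 \<le> t \<Longrightarrow>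
       ((\<lambda>s. u x s) has_real_derivative ((ux x t)\<^sup>2 / (2 * uxx x t))) (at t within {0..})"
    and u_h: "\<And>z t. 0 \<le> t \<Longrightarrow> ux (hfun \<mu> z t) t = exp (- z + t / 2)"
    and gamma: "\<gamma> < 1"
    and lim0: "((\<lambda>x. ux x 0 / x powr (\<gamma> - 1)) \<longlongrightarrow> 1) at_top"
    and t0: "0 \<le> t0"
  shows "((\<lambda>x. (- ux x t0 / uxx x t0) / x) \<longlongrightarrow> 1 / (1 - \<gamma>)) at_top"
proof -
  have "msetup \<mu>" unfolding msetup_def msetup_axioms_def
    using mu_finite mu_sets mu_nonzero mu_support mu_int by auto
  then interpret msetup \<mu> .
  define c where "c = 1 / (1 - \<gamma>)"
  have c0: "0 < c" using gamma unfolding c_def by simp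
  have hz: "hfun \<mu> z 0 = (\<integral>y. exp ((y - 0) * z) \<partial>\<mu>)" for z unfolding hfun_def by simp
  have pos0: "emeasure \<mu> {0<..} \<noteq> 0"
  proof
    assume a: "emeasure \<mu> {0<..} = 0"
    have "{0<..} \<in> null_sets \<mu>" using a by (simp add: null_sets_def sets_in)
    moreover have "{..0} \<in> null_sets \<mu>" using supp by (simp add: null_sets_def sets_in)
    ultimately have "{0<..} \<union> {..0::real} \<in> null_sets \<mu>" by (rule null_sets.Un)
    moreover have "{0<..} \<union> {..0::real} = space \<mu>" by (auto simp: space_eq)
    ultimately show False using nz by (simp add: null_setsD1)
  qed
  have h0top: "filterlim (\<lambda>z. hfun \<mu> z 0) at_top at_top"
    unfolding hz by (rule top_shift[OF pos0])
  have h0pos: "\<forall>\<^sub>F z in at_top. 0 < hfun \<mu> z 0"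
    using h0top by (simp add: filterlim_at_top_dense)
  have l1: "((\<lambda>z. ux (hfun \<mu> z 0) 0 / hfun \<mu> z 0 powr (\<gamma> - 1)) \<longlongrightarrow> 1) at_top"
    by (rule filterlim_compose[OF lim0 h0top])
  then have l2: "((\<lambda>z. exp (- z) / hfun \<mu> z 0 powr (\<gamma> - 1)) \<longlongrightarrow> 1) at_top"
    using u_h[of 0] by simp
  have l3: "((\<lambda>z. (exp (- z) / hfun \<mu> z 0 powr (\<gamma> - 1)) powr (1 / (\<gamma> - 1))) \<longlongrightarrow> 1 powr (1 / (\<gamma> - 1))) at_top"
    by (rule tendsto_powr[OF l2 tendsto_const]) simp
  have l4: "((\<lambda>z. exp (c * z) / hfun \<mu> z 0) \<longlongrightarrow> 1) at_top"
  proof -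
    have "\<forall>\<^sub>F z in at_top. (exp (- z) / hfun \<mu> z 0 powr (\<gamma> - 1)) powr (1 / (\<gamma> - 1)) = exp (c * z) / hfun \<mu> z 0"
      using h0pos by eventually_elim (simp add: powr_id gamma c_def)
    then show ?thesis using l3 by (simp add: tendsto_cong)
  qed
  have l5: "((\<lambda>z. \<integral>y. exp ((y - c) * z) \<partial>\<mu>) \<longlongrightarrow> 1) at_top"
  proof -
    have "((\<lambda>z. inverse (exp (c * z) / hfun \<mu> z 0)) \<longlongrightarrow> inverse 1) at_top"
      by (rule tendsto_inverse[OF l4]) simp
    moreover have "inverse (exp (c * z) / hfun \<mu> z 0) = (\<integral>y. exp ((y - c) * z) \<partial>\<mu>)" for z
    proof -
      have "(\<integral>y. exp ((y - c) * z) \<partial>\<mu>) = (\<integral>y. exp (y * z) / exp (c * z) \<partial>\<mu>)"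
        by (intro Bochner_Integration.integral_cong refl) (simp add: exp_diff[symmetric] algebra_simps)
      also have "\<dots> = hfun \<mu> z 0 / exp (c * z)" unfolding hfun_def by simp
      finally show ?thesis by simp
    qed
    ultimately show ?thesis by simp
  qed
  have Ac: "AE y in \<mu>. y \<le> c" and mc: "measure \<mu> {c} = 1" using support[OF l5] by auto
  define H where "H z = hfun \<mu> z t0" for z
  define D where "D z = (\<integral>y. y * exp (y * z - y\<^sup>2 * t0 / 2) \<partial>\<mu>)" for z
  have Hder: "(H has_real_derivative D z) (at z)" for z
    unfolding H_def D_def by (rule H_deriv[OF Ac c0 t0])
  have Hlb: "exp (c * z - c\<^sup>2 * t0 / 2) \<le> H z" for z
  proof -
    have "(\<integral>y. indicator {c} y * exp (c * z - c\<^sup>2 * t0 / 2) \<partial>\<mu>) \<le> H z"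
      unfolding H_def hfun_def
    proof (rule integral_mono)
      show "integrable \<mu> (\<lambda>y. indicator {c} y * exp (c * z - c\<^sup>2 * t0 / 2))"
        by (intro integrable_mult_left integrable_real_indicator) (auto simp: sets_in less_top[symmetric] emeasure_finite)
      show "integrable \<mu> (\<lambda>y. exp (y * z - y\<^sup>2 * t0 / 2))" by (rule int_h[OF t0])
      fix y show "indicator {c} y * exp (c * z - c\<^sup>2 * t0 / 2) \<le> exp (y * z - y\<^sup>2 * t0 / 2)"
        by (auto simp: indicator_def)
    qed
    then show ?thesis using mc by (simp add: sets_in space_eq)
  qed
  have Dlb: "c * exp (c * z - c\<^sup>2 * t0 / 2) \<le> D z" for z
  proof -
    have "(\<integral>y. indicator {c} y * (c * exp (c * z - c\<^sup>2 * t0 / 2)) \<partial>\<mu>) \<le> D z"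
      unfolding D_def
    proof (rule integral_mono_AE)
      show "integrable \<mu> (\<lambda>y. indicator {c} y * (c * exp (c * z - c\<^sup>2 * t0 / 2)))"
        by (intro integrable_mult_left integrable_real_indicator) (auto simp: sets_in less_top[symmetric] emeasure_finite)
      show "integrable \<mu> (\<lambda>y. y * exp (y * z - y\<^sup>2 * t0 / 2))" by (rule int_hd[OF t0])
      show "AE y in \<mu>. indicator {c} y * (c * exp (c * z - c\<^sup>2 * t0 / 2)) \<le> y * exp (y * z - y\<^sup>2 * t0 / 2)"
        using AE_pos by eventually_elim (auto simp: indicator_def)
    qed
    then show ?thesis using mc by (simp add: sets_in space_eq)
  qed
  have Hpos: "0 < H z" for z by (rule less_le_trans[OF _ Hlb]) simp
  have Dpos: "0 < D z" for z by (rule less_le_trans[OF _ Dlb]) (use c0 in simp)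
  have Hmono: "H a < H b" if "a < b" for a b
  proof (rule DERIV_pos_imp_increasing[OF that])
    fix x show "\<exists>y. (H has_real_derivative y) (at x) \<and> 0 < y" using Hder[of x] Dpos[of x] by blast
  qed
  have Hcont: "isCont H z" for z using Hder by (rule DERIV_isCont)
  have Htop: "filterlim H at_top at_top"
  proof (rule filterlim_at_top_mono)
    show "filterlim (\<lambda>z. exp (c * z - c\<^sup>2 * t0 / 2)) at_top at_top"
      using c0 by real_asymp
  qed (use Hlb in auto)
  have rD: "- ux (H z) t0 / uxx (H z) t0 = D z" for z
  proof -
    have d1: "((\<lambda>w. ux (H w) t0) has_real_derivative uxx (H z) t0 * D z) (at z)"
      by (rule DERIV_chain2[OF u_xx[OF Hpos t0] Hder])
    have fe: "(\<lambda>w. ux (H w) t0) = (\<lambda>w. exp (- w + t0 / 2))"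
      unfolding H_def using u_h[OF t0] by auto
    have d2: "((\<lambda>w. ux (H w) t0) has_real_derivative - exp (- z + t0 / 2)) (at z)"
      unfolding fe by (auto intro!: derivative_eq_intros)
    have e1: "uxx (H z) t0 * D z = - exp (- z + t0 / 2)" by (rule DERIV_unique[OF d1 d2])
    have e2: "ux (H z) t0 = exp (- z + t0 / 2)" unfolding H_def by (rule u_h[OF t0])
    have ne: "D z \<noteq> 0" using Dpos[of z] by simp
    have u2: "uxx (H z) t0 = - exp (- z + t0 / 2) / D z" using e1 ne by (metis nonzero_mult_div_cancel_right minus_divide_left)
    show ?thesis unfolding u2 e2 using ne by simp
  qed
  have G1: "((\<lambda>z. \<integral>y. exp (- (y\<^sup>2 * t0 / 2)) * exp ((y - c) * z) \<partial>\<mu>) \<longlongrightarrow> measure \<mu> {c} * exp (- (c\<^sup>2 * t0 / 2))) at_top"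
    by (rule DC[OF Ac, where K=1]) (use t0 in auto)
  have G2: "((\<lambda>z. \<integral>y. (y * exp (- (y\<^sup>2 * t0 / 2))) * exp ((y - c) * z) \<partial>\<mu>) \<longlongrightarrow> measure \<mu> {c} * (c * exp (- (c\<^sup>2 * t0 / 2)))) at_top"
  proof (rule DC[OF Ac, where K=c])
    show "(\<lambda>y. y * exp (- (y\<^sup>2 * t0 / 2))) \<in> borel_measurable borel" by measurable
    fix y :: real assume y: "0 < y" "y \<le> c"
    have "exp (- (y\<^sup>2 * t0 / 2)) \<le> 1" using t0 by simp
    then have "y * exp (- (y\<^sup>2 * t0 / 2)) \<le> c * 1" using y by (intro mult_mono) auto
    then show "\<bar>y * exp (- (y\<^sup>2 * t0 / 2))\<bar> \<le> c" using y by (simp add: abs_mult)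
  qed
  have pw: "exp (- (y\<^sup>2 * t0 / 2)) * exp ((y - c) * z) = exp (y * z - y\<^sup>2 * t0 / 2) / exp (c * z)" for y z
  proof -
    have "exp (- (y\<^sup>2 * t0 / 2)) * exp ((y - c) * z) = exp (- (y\<^sup>2 * t0 / 2) + (y - c) * z)" by (rule exp_add[symmetric])
    also have "- (y\<^sup>2 * t0 / 2) + (y - c) * z = (y * z - y\<^sup>2 * t0 / 2) - c * z" by (simp add: algebra_simps)
    also have "exp \<dots> = exp (y * z - y\<^sup>2 * t0 / 2) / exp (c * z)" by (rule exp_diff)
    finally show ?thesis .
  qed
  have pw2: "(y * exp (- (y\<^sup>2 * t0 / 2))) * exp ((y - c) * z) = y * exp (y * z - y\<^sup>2 * t0 / 2) / exp (c * z)" for y z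
    by (metis pw mult.assoc times_divide_eq_right)
  have HE: "(\<integral>y. exp (- (y\<^sup>2 * t0 / 2)) * exp ((y - c) * z) \<partial>\<mu>) = H z / exp (c * z)" for z
  proof -
    have "(\<integral>y. exp (- (y\<^sup>2 * t0 / 2)) * exp ((y - c) * z) \<partial>\<mu>) = (\<integral>y. exp (y * z - y\<^sup>2 * t0 / 2) / exp (c * z) \<partial>\<mu>)"
      by (intro Bochner_Integration.integral_cong refl) (rule pw)
    then show ?thesis unfolding H_def hfun_def by simp
  qed
  have DE: "(\<integral>y. (y * exp (- (y\<^sup>2 * t0 / 2))) * exp ((y - c) * z) \<partial>\<mu>) = D z / exp (c * z)" for z
  proof -
    have "(\<integral>y. (y * exp (- (y\<^sup>2 * t0 / 2))) * exp ((y - c) * z) \<partial>\<mu>) = (\<integral>y. y * exp (y * z - y\<^sup>2 * t0 / 2) / exp (c * z) \<partial>\<mu>)"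
      by (intro Bochner_Integration.integral_cong refl) (rule pw2)
    then show ?thesis unfolding D_def by simp
  qed
  have ratio: "((\<lambda>z. D z / H z) \<longlongrightarrow> c) at_top"
  proof -
    have "((\<lambda>z. (D z / exp (c * z)) / (H z / exp (c * z))) \<longlongrightarrow> (c * exp (- (c\<^sup>2 * t0 / 2))) / exp (- (c\<^sup>2 * t0 / 2))) at_top"
      using tendsto_divide[OF G2 G1] unfolding HE DE mc by simp
    moreover have "(D z / exp (c * z)) / (H z / exp (c * z)) = D z / H z" for z by simp
    ultimately show ?thesis by simp
  qed
  have ex: "\<exists>z\<ge>0. H z = x" if "H 0 \<le> x" for x
  proof -
    obtain b where b: "\<And>w. w \<ge> b \<Longrightarrow> H w \<ge> x"
      using Htop unfolding filterlim_at_top eventually_at_top_linorder by blast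
    have "H 0 \<le> x" "x \<le> H (max b 0)" "0 \<le> max b 0" using that b[of "max b 0"] by auto
    from IVT[OF this] Hcont show ?thesis by blast
  qed
  define Z where "Z x = (SOME z. 0 \<le> z \<and> H z = x)" for x
  have Z: "0 \<le> Z x \<and> H (Z x) = x" if "H 0 \<le> x" for x
    unfolding Z_def using someI_ex[OF ex[OF that]] by blast
  have Zlim: "filterlim Z at_top at_top"
    unfolding filterlim_at_top eventually_at_top_linorder
  proof (intro allI exI[of _ "max (H 0) (H B)" for B] impI)
    fix B x assume x: "max (H 0) (H B) \<le> x"
    show "B \<le> Z x"
    proof (rule ccontr)
      assume "\<not> B \<le> Z x"
      then have "H (Z x) < H B" by (intro Hmono) simp
      then show False using Z[of x] x by simp
    qed
  qed
  have "((\<lambda>x. D (Z x) / H (Z x)) \<longlongrightarrow> c) at_top"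
    by (rule filterlim_compose[OF ratio Zlim])
  moreover have "\<forall>\<^sub>F x in at_top. D (Z x) / H (Z x) = (- ux x t0 / uxx x t0) / x"
    unfolding eventually_at_top_linorder
  proof (intro exI[of _ "H 0"] allI impI)
    fix x assume "H 0 \<le> x"
    then have "H (Z x) = x" using Z by blast
    then show "D (Z x) / H (Z x) = (- ux x t0 / uxx x t0) / x" using rD[of "Z x"] by simp
  qed
  ultimately show ?thesis unfolding c_def by (rule Lim_transform_eventually)
qed

end
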